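(* Let $G=(V,E)$ be a finite connected graph with nodes $V=\{v_1,\dots,v_n\}$, let $S=\{v_1,\dots,v_\sigma\}$ with $\sigma\ge1$ be the set of sources, and assume the non-sources are ordered so that $\deg_G(v_{\sigma+1})\ge\deg_G(v_{\sigma+2})\ge\cdots\ge\deg_G(v_n)$. Fix $t\in\mathbb{Z}_{\ge 0}$. Consider all tuples $(V_0,\dots,V_t,\pi)$ with $V_0\subseteq V_1\subseteq\cdots\subseteq V_t\subseteq V$ and $\pi:V\setminus S\to V$ satisfying: $V_0=S$; for all $k=1,\dots,t$ and all $v\in V_k\setminus S$, $\pi(v)\in V_{k-1}$; for all $k=1,\dots,t$ and all $u,v\in V_k\setminus V_{k-1}$, $\pi(u)=\pi(v)$ only if $u=v$; and for all $v\in V$, $|\pi^{-1}(v)|\le \deg_G(v)-\delta_{v\in V\setminus S}$ (here $\pi$ need not map along edges of $G$). Then the maximum of $|V_t|$ over all such tuples is attained by a tuple satisfying, for every $k=1,\dots,t$, $$\min\{i: v_i\in V_k\setminus V_{k-1}\}>\max\{i: v_i\in V_{k-1}\}.$$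
   Context: $\deg_G(v)$ is the degree of $v$ in $G$; $\delta_p=1$ if proposition $p$ is true and $0$ otherwise; $\pi^{-1}(v)=\{u\in V\setminus S:\pi(u)=v\}$. The minimum over an empty set is taken to be $+\infty$. *)

theory Defs
  imports Main
begin

text \<open>Finite simple graph on vertex set {1..n} (vertex v_i is the number i),
  given by an edge predicate E.\<close>

definition simple_graph :: "nat \<Rightarrow> (nat \<Rightarrow> nat \<Rightarrow> bool) \<Rightarrow> bool" where
  "simple_graph n E \<longleftrightarrow>
     (\<forall>u v. E u v \<longrightarrow> u \<in> {1..n} \<and> v \<in> {1..n}) \<and>
     (\<forall>u v. E u v \<longrightarrow> E v u) \<and>
     (\<forall>v. \<not> E v v)"

definition connected_graph :: "nat \<Rightarrow> (nat \<Rightarrow> nat \<Rightarrow> bool) \<Rightarrow> bool" where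
  "connected_graph n E \<longleftrightarrow> (\<forall>u\<in>{1..n}. \<forall>v\<in>{1..n}. E\<^sup>*\<^sup>* u v)"

definition deg :: "(nat \<Rightarrow> nat \<Rightarrow> bool) \<Rightarrow> nat \<Rightarrow> nat" where
  "deg E v = card {u. E v u}"

definition valid_tuple ::
  "nat \<Rightarrow> (nat \<Rightarrow> nat \<Rightarrow> bool) \<Rightarrow> nat \<Rightarrow> nat \<Rightarrow> (nat \<Rightarrow> nat set) \<Rightarrow> (nat \<Rightarrow> nat) \<Rightarrow> bool" where
  "valid_tuple n E \<sigma> t Vs \<pi> \<longleftrightarrow>
     (let V = {1..n}; S = {1..\<sigma>} in
       Vs 0 = S \<and>
       (\<forall>k<t. Vs k \<subseteq> Vs (Suc k)) \<and>
       Vs t \<subseteq> V \<and>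
       (\<forall>v\<in>V - S. \<pi> v \<in> V) \<and>
       (\<forall>k\<in>{1..t}. \<forall>v\<in>Vs k - S. \<pi> v \<in> Vs (k - 1)) \<and>
       (\<forall>k\<in>{1..t}. \<forall>u\<in>Vs k - Vs (k - 1). \<forall>v\<in>Vs k - Vs (k - 1).
           \<pi> u = \<pi> v \<longrightarrow> u = v) \<and>
       (\<forall>v\<in>V. card {u\<in>V - S. \<pi> u = v} + (if v \<in> V - S then 1 else 0) \<le> deg E v))"

end

theory Submission
  imports Defs
begin


lemma valid_unf: "valid_tuple n E \<sigma> t Vs \<pi> \<longleftrightarrow>
       Vs 0 = {1..\<sigma>} \<and>
       (\<forall>k<t. Vs k \<subseteq> Vs (Suc k)) \<and>
       Vs t \<subseteq> {1..n} \<and>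
       (\<forall>v\<in>{1..n} - {1..\<sigma>}. \<pi> v \<in> {1..n}) \<and>
       (\<forall>k\<in>{1..t}. \<forall>v\<in>Vs k - {1..\<sigma>}. \<pi> v \<in> Vs (k - 1)) \<and>
       (\<forall>k\<in>{1..t}. \<forall>u\<in>Vs k - Vs (k - 1). \<forall>v\<in>Vs k - Vs (k - 1).
           \<pi> u = \<pi> v \<longrightarrow> u = v) \<and>
       (\<forall>v\<in>{1..n}. card {u\<in>{1..n} - {1..\<sigma>}. \<pi> u = v} + (if v \<in> {1..n} - {1..\<sigma>} then 1 else 0) \<le> deg E v)"
  by (simp add: valid_tuple_def Let_def)

lemma exists_valid:
  assumes sg: "simple_graph n E" and cg: "connected_graph n E"
    and s1: "1 \<le> \<sigma>" and sn: "\<sigma> \<le> n"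
  shows "\<exists>Vs \<pi>. valid_tuple n E \<sigma> t Vs \<pi>"
proof -
  define V where "V = {1..n::nat}"
  define S where "S = {1..\<sigma>::nat}"
  have Ein: "\<And>a b. E a b \<Longrightarrow> a \<in> V \<and> b \<in> V" using sg unfolding simple_graph_def V_def by blast
  have Esym: "\<And>a b. E a b \<Longrightarrow> E b a" using sg unfolding simple_graph_def by blast
  have oneV: "1 \<in> V" using s1 sn V_def by auto
  define d where "d v = (LEAST m. (E ^^ m) 1 v)" for v
  have reach: "\<exists>m. (E ^^ m) 1 v" if "v \<in> V" for v
    using cg oneV that unfolding connected_graph_def V_def rtranclp_power by blast
  have dreach: "(E ^^ d v) 1 v" if "v \<in> V" for v
    unfolding d_def using reach[OF that] by (rule LeastI_ex)
  have dle: "d v \<le> m" if "(E ^^ m) 1 v" for v m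
    unfolding d_def using that by (rule Least_le)
  have par_ex: "\<exists>w. E w v \<and> d w + 1 = d v" if "v \<in> V - S" for v
  proof -
    have vV: "v \<in> V" and v1: "v \<noteq> 1" using that s1 S_def by auto
    have "d v \<noteq> 0" using dreach[OF vV] v1 by (metis relpowp.simps(1))
    then obtain m where m: "d v = Suc m" by (cases "d v") auto
    from dreach[OF vV] m obtain w where w1: "(E ^^ m) 1 w" and w2: "E w v"
      by (metis relpowp_Suc_E)
    have "d w \<le> m" using dle[OF w1] .
    moreover have "(E ^^ Suc (d w)) 1 v" using dreach[of w] Ein[OF w2] w2 by auto
    hence "d v \<le> Suc (d w)" by (rule dle)
    ultimately show ?thesis using w2 m by (intro exI[of _ w]) auto
  qed
  define par where "par v = (SOME w. E w v \<and> d w + 1 = d v)" for v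
  have par: "E (par v) v \<and> d (par v) + 1 = d v" if "v \<in> V - S" for v
    unfolding par_def using someI_ex[OF par_ex[OF that]] .
  have finN: "finite {u. E x u}" for x
    by (rule finite_subset[of _ V]) (auto dest: Ein simp: V_def)
  have "valid_tuple n E \<sigma> t (\<lambda>_. S) par"
    unfolding valid_unf
  proof (intro conjI ballI allI impI)
    show "S = {1..\<sigma>}" by (simp add: S_def)
    show "S \<subseteq> {1..n}" using sn S_def by auto
  next
    fix v assume "v \<in> {1..n} - {1..\<sigma>}"
    then show "par v \<in> {1..n}" using par[of v] Ein unfolding V_def S_def by blast
  next
    fix x assume xV: "x \<in> {1..n}"
    have sub: "{u\<in>{1..n} - {1..\<sigma>}. par u = x} \<subseteq> {u. E x u}"
      using par Esym unfolding V_def S_def by blast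
    show "card {u\<in>{1..n} - {1..\<sigma>}. par u = x} + (if x \<in> {1..n} - {1..\<sigma>} then 1 else 0) \<le> deg E x"
    proof (cases "x \<in> {1..n} - {1..\<sigma>}")
      case True
      have px: "E x (par x)" using par[of x] True Esym unfolding V_def S_def by blast
      have "par x \<notin> {u\<in>{1..n} - {1..\<sigma>}. par u = x}"
      proof
        assume "par x \<in> {u\<in>{1..n} - {1..\<sigma>}. par u = x}"
        hence "d x + 1 = d (par x)" using par[of "par x"] unfolding V_def S_def by auto
        moreover have "d (par x) + 1 = d x" using par[of x] True unfolding V_def S_def by auto
        ultimately show False by simp
      qed
      hence "{u\<in>{1..n} - {1..\<sigma>}. par u = x} \<subseteq> {u. E x u} - {par x}" using sub by blast
      hence "card {u\<in>{1..n} - {1..\<sigma>}. par u = x} \<le> card ({u. E x u} - {par x})"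
        by (intro card_mono) (auto intro: finN)
      also have "\<dots> = deg E x - 1" using px finN unfolding deg_def by simp
      finally have c1: "card {u\<in>{1..n} - {1..\<sigma>}. par u = x} \<le> deg E x - 1" .
      have "0 < deg E x" unfolding deg_def using px finN[of x] by (auto simp: card_gt_0_iff)
      then show ?thesis using c1 True by simp
    next
      case False
      have "card {u\<in>{1..n} - {1..\<sigma>}. par u = x} \<le> deg E x"
        unfolding deg_def using sub finN by (intro card_mono) auto
      then show ?thesis unfolding if_not_P[OF False] by simp
    qed
  qed (auto simp: S_def)
  then show ?thesis by blast
qed



lemma mono_chain:
  assumes "\<forall>k<t. Vs k \<subseteq> Vs (Suc k)" "a \<le> b" "b \<le> t"
  shows "Vs a \<subseteq> (Vs b :: 'a set)"
  using assms(2,3)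
proof (induction b)
  case 0 then show ?case by simp
next
  case (Suc b)
  then show ?case using assms(1)
    by (metis Suc_le_eq le_SucE order.refl subset_trans less_imp_le_nat)
qed

lemma layer_unique:
  assumes "\<forall>k<t. Vs k \<subseteq> Vs (Suc k)" "m1 \<in> {1..t}" "m2 \<in> {1..t}"
    "x \<in> Vs m1 - Vs (m1 - 1)" "x \<in> Vs m2 - Vs (m2 - 1)"
  shows "m1 = m2"
proof (rule ccontr)
  assume "m1 \<noteq> m2"
  then consider "m1 < m2" | "m2 < m1" by linarith
  then show False
  proof cases
    case 1
    have "Vs m1 \<subseteq> Vs (m2 - 1)" using mono_chain[OF assms(1), of m1 "m2 - 1"] 1 assms(3) by auto
    then show False using assms(4,5) by auto
  next
    case 2
    have "Vs m2 \<subseteq> Vs (m1 - 1)" using mono_chain[OF assms(1), of m2 "m1 - 1"] 2 assms(2) by auto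
    then show False using assms(4,5) by auto
  qed
qed

lemma swap_step:
  assumes val: "valid_tuple n E \<sigma> t Vs \<pi>"
    and degm: "\<forall>i j. \<sigma> < i \<and> i \<le> j \<and> j \<le> n \<longrightarrow> deg E j \<le> deg E i"
    and k: "k \<in> {1..t}" and u: "u \<in> Vs k - Vs (k - 1)" and j: "j \<in> Vs (k - 1)" and uj: "u < j"
  shows "\<exists>Vs' \<pi>'. valid_tuple n E \<sigma> t Vs' \<pi>' \<and> card (Vs' t) = card (Vs t) \<and>
           (\<Sum>i\<le>t. \<Sum>(Vs' i)) < (\<Sum>i\<le>t. \<Sum>(Vs i))"
proof -
  define V where "V = {1..n}"
  define S where "S = {1..\<sigma>}"
  note vu = val[unfolded valid_unf, folded V_def S_def]
  have V0: "Vs 0 = S" and mono: "\<forall>k<t. Vs k \<subseteq> Vs (Suc k)" and Vt: "Vs t \<subseteq> V"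
    and piV: "\<forall>v\<in>V - S. \<pi> v \<in> V"
    and piL: "\<forall>k\<in>{1..t}. \<forall>v\<in>Vs k - S. \<pi> v \<in> Vs (k - 1)"
    and piI: "\<forall>k\<in>{1..t}. \<forall>a\<in>Vs k - Vs (k - 1). \<forall>b\<in>Vs k - Vs (k - 1). \<pi> a = \<pi> b \<longrightarrow> a = b"
    and cap: "\<forall>v\<in>V. card {w\<in>V - S. \<pi> w = v} + (if v \<in> V - S then 1 else 0) \<le> deg E v"
    using vu by auto
  have mc: "Vs a \<subseteq> Vs b" if "a \<le> b" "b \<le> t" for a b using mono_chain[OF mono that] .
  have km: "k - 1 \<le> t" "1 \<le> k" "k \<le> t" using k by auto
  have SVk: "S \<subseteq> Vs (k - 1)" using mc[of 0 "k - 1"] k V0 by (simp add: le_diff_conv)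
  have uS: "u \<notin> S" using u SVk by auto
  have uV: "u \<in> V" using u mc[of k t] km Vt by auto
  have jS: "j \<notin> S" using uj uS uV S_def V_def by auto
  have jV: "j \<in> V" using j mc[of "k - 1" t] km Vt by auto
  have dju: "deg E j \<le> deg E u" using degm uS uj jV uV unfolding S_def V_def
    by (metis atLeastAtMost_iff not_le less_imp_le_nat)
  define sw where "sw x = (if x = u then j else if x = j then u else x)" for x
  have swsw[simp]: "sw (sw x) = x" for x unfolding sw_def by auto
  have swinj: "inj sw" by (metis injI swsw)
  have swV: "sw x \<in> V \<longleftrightarrow> x \<in> V" for x using uV jV unfolding sw_def by auto
  have swS: "sw x \<in> S \<longleftrightarrow> x \<in> S" for x using uS jS unfolding sw_def by auto
  have swEq: "sw a = b \<longleftrightarrow> a = sw b" for a b by (metis swsw)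
  have swimg: "x \<in> sw ` A \<longleftrightarrow> sw x \<in> A" for x A by (metis image_iff swsw)
  define W where "W i = sw ` Vs i" for i
  define p0 where "p0 w = sw (\<pi> (sw w))" for w
  define ch where "ch f x = {w \<in> V - S. f w = x}" for f :: "nat \<Rightarrow> nat" and x
  have finch: "finite (ch f x)" for f x unfolding ch_def V_def by auto
  have chsub: "ch f x \<subseteq> V - S" for f x unfolding ch_def by auto
  have ch0: "ch p0 x = sw ` ch \<pi> (sw x)" for x
  proof -
    have "w \<in> ch p0 x \<longleftrightarrow> w \<in> sw ` ch \<pi> (sw x)" for w
      unfolding ch_def p0_def swimg by (simp add: swV swS swEq)
    then show ?thesis by blast
  qed
  have cardch0: "card (ch p0 x) = card (ch \<pi> (sw x))" for x
    unfolding ch0 by (rule card_image) (meson inj_on_subset swinj subset_UNIV)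
  have W0: "W 0 = S" unfolding W_def V0 using swS swimg by auto
  have Wmono: "\<forall>k<t. W k \<subseteq> W (Suc k)" unfolding W_def using mono by blast
  have WV: "W m \<subseteq> V" if "m \<le> t" for m using mc[OF that order.refl] Vt swV swimg unfolding W_def by blast
  have Wl: "W m - W (m - 1) = sw ` (Vs m - Vs (m - 1))" for m
    unfolding W_def by (simp add: image_set_diff swinj)
  have p0L: "p0 v \<in> W (m - 1)" if "m \<in> {1..t}" "v \<in> W m - S" for m v
  proof -
    have "sw v \<in> Vs m - S" using that swimg swS unfolding W_def by auto
    then show ?thesis using piL that(1) unfolding p0_def W_def swimg by auto
  qed
  have p0I: "a = b" if "m \<in> {1..t}" "a \<in> W m - W (m - 1)" "b \<in> W m - W (m - 1)" "p0 a = p0 b" for m a b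
  proof -
    have "sw a \<in> Vs m - Vs (m - 1)" "sw b \<in> Vs m - Vs (m - 1)" using that(2,3) unfolding W_def swimg by auto
    moreover have "\<pi> (sw a) = \<pi> (sw b)" using that(4) unfolding p0_def by (metis swsw)
    ultimately have "sw a = sw b" using piI that(1) by blast
    then show ?thesis by (metis swsw)
  qed
  define cu where "cu = card (ch \<pi> u)"
  define cj where "cj = card (ch \<pi> j)"
  have uVS: "u \<in> V - S" using uV uS by blast
  have jVS: "j \<in> V - S" using jV jS by blast
  have cucap: "cu + 1 \<le> deg E u" using bspec[OF cap uV] uVS unfolding cu_def ch_def by simp
  have cjcap: "cj + 1 \<le> deg E j" using bspec[OF cap jV] jVS unfolding cj_def ch_def by simp
  have c0j: "card (ch p0 j) = cu" unfolding cardch0 cu_def by (simp add: sw_def)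
  have c0u: "card (ch p0 u) = cj" unfolding cardch0 cj_def by (simp add: sw_def)
  define B where "B = {w \<in> ch p0 j. \<exists>w'\<in>ch p0 u. \<exists>m\<in>{1..t}. w \<in> W m - W (m - 1) \<and> w' \<in> W m - W (m - 1)}"
  define F where "F = ch p0 j - B"
  define g where "g w = (SOME w'. w' \<in> ch p0 u \<and> (\<exists>m\<in>{1..t}. w \<in> W m - W (m - 1) \<and> w' \<in> W m - W (m - 1)))" for w
  have gB: "g w \<in> ch p0 u \<and> (\<exists>m\<in>{1..t}. w \<in> W m - W (m - 1) \<and> g w \<in> W m - W (m - 1))" if "w \<in> B" for w
  proof -
    have "\<exists>w'. w' \<in> ch p0 u \<and> (\<exists>m\<in>{1..t}. w \<in> W m - W (m - 1) \<and> w' \<in> W m - W (m - 1))"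
      using that unfolding B_def by blast
    then show ?thesis unfolding g_def by (rule someI_ex)
  qed
  have "inj_on g B"
  proof (rule inj_onI)
    fix a b assume a: "a \<in> B" and b: "b \<in> B" and gab: "g a = g b"
    obtain m1 where m1: "m1 \<in> {1..t}" "a \<in> W m1 - W (m1 - 1)" "g a \<in> W m1 - W (m1 - 1)" using gB[OF a] by blast
    obtain m2 where m2: "m2 \<in> {1..t}" "b \<in> W m2 - W (m2 - 1)" "g b \<in> W m2 - W (m2 - 1)" using gB[OF b] by blast
    have "m1 = m2" using layer_unique[OF Wmono m1(1) m2(1) m1(3)] m2(3) gab by simp
    moreover have "p0 a = p0 b" using a b unfolding B_def ch_def by auto
    ultimately show "a = b" using p0I m1 m2 by blast
  qed
  moreover have gimg: "g ` B \<subseteq> ch p0 u" by (rule image_subsetI) (use gB in blast)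
  ultimately have cB: "card B \<le> cj" using card_inj_on_le[of g B "ch p0 u"] finch c0u by simp
  have BF: "B \<subseteq> ch p0 j" unfolding B_def by blast
  have finB: "finite B" using BF finch by (rule finite_subset)
  have cF: "card F = cu - card B" unfolding F_def using card_Diff_subset[OF finB BF] c0j by simp
  define e where "e = cu - (deg E j - 1)"
  have "e \<le> card F" using cF cB cjcap unfolding e_def by linarith
  then obtain M where MF: "M \<subseteq> F" and cM: "card M = e" and finM: "finite M"
    by (rule obtain_subset_with_card_n)
  have Mj: "M \<subseteq> ch p0 j" using MF F_def by blast
  define \<pi>' where "\<pi>' w = (if w \<in> M then u else p0 w)" for w
  have val': "valid_tuple n E \<sigma> t W \<pi>'"
    unfolding valid_unf
  proof (fold V_def S_def, intro conjI ballI allI impI)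
    show "W 0 = S" by (rule W0)
    show "\<And>k. k < t \<Longrightarrow> W k \<subseteq> W (Suc k)" using Wmono by blast
    show "W t \<subseteq> V" using WV by simp
  next
    fix v assume v: "v \<in> V - S"
    have "p0 v \<in> V" using piV v swV swS unfolding p0_def by auto
    then show "\<pi>' v \<in> V" using uV unfolding \<pi>'_def by auto
  next
    fix m v assume m: "m \<in> {1..t}" and v: "v \<in> W m - S"
    show "\<pi>' v \<in> W (m - 1)"
    proof (cases "v \<in> M")
      case True
      hence "p0 v = j" using Mj ch_def by auto
      hence "j \<in> W (m - 1)" using p0L[OF m v] by simp
      hence "u \<in> Vs (m - 1)" using uj unfolding W_def swimg by (simp add: sw_def)
      hence "k \<le> m - 1"
      proof -
        assume um: "u \<in> Vs (m - 1)"
        show ?thesis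
        proof (rule ccontr)
          assume "\<not> k \<le> m - 1"
          hence "Vs (m - 1) \<subseteq> Vs (k - 1)" using mc[of "m - 1" "k - 1"] km by simp
          then show False using um u by blast
        qed
      qed
      hence "Vs (k - 1) \<subseteq> Vs (m - 1)" using m by (intro mc) auto
      hence "j \<in> Vs (m - 1)" using j by blast
      then show ?thesis using True uj unfolding \<pi>'_def W_def swimg by (simp add: sw_def)
    next
      case False
      then show ?thesis using p0L[OF m v] unfolding \<pi>'_def by simp
    qed
  next
    fix m a b assume m: "m \<in> {1..t}" and a: "a \<in> W m - W (m - 1)" and b: "b \<in> W m - W (m - 1)"
      and ab: "\<pi>' a = \<pi>' b"
    have WmV: "W m \<subseteq> V" using WV m by auto
    have m1t: "m - 1 \<le> t" using m by auto
    have SW: "S \<subseteq> W (m - 1)" using mono_chain[OF Wmono le0 m1t] W0 by simp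
    have inVS: "x \<in> V - S" if "x \<in> W m - W (m - 1)" for x
      using that WmV SW by blast
    have noMix: False if "x \<in> M" "y \<notin> M" "x \<in> W m - W (m - 1)" "y \<in> W m - W (m - 1)" "\<pi>' x = \<pi>' y" for x y
    proof -
      have "p0 y = u" using that unfolding \<pi>'_def by simp
      hence "y \<in> ch p0 u" using inVS[OF that(4)] unfolding ch_def by simp
      moreover have "x \<in> ch p0 j" using that(1) Mj by blast
      ultimately have "x \<in> B" unfolding B_def using that(3,4) m by blast
      then show False using that(1) MF F_def by blast
    qed
    show "a = b"
    proof (cases "a \<in> M"; cases "b \<in> M")
      assume "a \<in> M" "b \<in> M"
      hence "p0 a = p0 b" using Mj unfolding ch_def by auto
      then show ?thesis using p0I m a b by blast
    next
      assume "a \<in> M" "b \<notin> M"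
      then show ?thesis using noMix[of a b] a b ab by blast
    next
      assume "a \<notin> M" "b \<in> M"
      then show ?thesis using noMix[of b a] a b ab by auto
    next
      assume "a \<notin> M" "b \<notin> M"
      then show ?thesis using p0I m a b ab unfolding \<pi>'_def by auto
    qed
  next
    fix x assume xV: "x \<in> V"
    show "card {w \<in> V - S. \<pi>' w = x} + (if x \<in> V - S then 1 else 0) \<le> deg E x"
    proof -
      have chx: "{w \<in> V - S. \<pi>' w = x} = ch \<pi>' x" unfolding ch_def ..
      consider (cu) "x = u" | (cj) "x = j" | (oth) "x \<noteq> u" "x \<noteq> j" by blast
      then show ?thesis
      proof cases
        case cu
        have e1: "ch \<pi>' u = ch p0 u \<union> M" using Mj chsub unfolding ch_def \<pi>'_def by auto
        have e2: "ch p0 u \<inter> M = {}" using Mj uj unfolding ch_def by auto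
        have c1: "card (ch \<pi>' u) = cj + e" unfolding e1 using e2 c0u cM finch finM by (simp add: card_Un_disjoint)
        have c2: "cj + e + 1 \<le> deg E u" using cucap cjcap dju unfolding e_def by arith
        show ?thesis using c1 c2 uVS cu unfolding chx by simp
      next
        case cj
        have e1: "ch \<pi>' j = ch p0 j - M" using Mj chsub uj unfolding ch_def \<pi>'_def by auto
        have c1: "card (ch \<pi>' j) = cu - e" unfolding e1 using c0j cM finM Mj by (simp add: card_Diff_subset)
        have c2: "cu - e + 1 \<le> deg E j" using cucap cjcap dju unfolding e_def by arith
        show ?thesis using c1 c2 jVS cj unfolding chx by simp
      next
        case oth
        have e1: "ch \<pi>' x = ch p0 x" using Mj oth unfolding ch_def \<pi>'_def by auto
        have "sw x = x" using oth unfolding sw_def by simp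
        hence c1: "card (ch \<pi>' x) = card (ch \<pi> x)" using cardch0[of x] e1 by simp
        have "card (ch \<pi> x) + (if x \<in> V - S then 1 else 0) \<le> deg E x" using cap xV unfolding ch_def by blast
        then show ?thesis unfolding chx c1 .
      qed
    qed
  qed
  have cardW: "card (W t) = card (Vs t)" unfolding W_def
    by (rule card_image) (meson inj_on_subset swinj subset_UNIV)
  have sumW: "\<Sum>(W i) = (\<Sum>x\<in>Vs i. sw x)" for i
    unfolding W_def by (simp add: sum.reindex[OF inj_on_subset[OF swinj subset_UNIV]])
  have finVs: "finite (Vs i)" if "i \<le> t" for i using mc[OF that order.refl] Vt unfolding V_def by (meson finite_atLeastAtMost finite_subset subset_trans)
  have le: "\<Sum>(W i) \<le> \<Sum>(Vs i)" if "i \<le> t" for i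
  proof (cases "u \<in> Vs i")
    case True
    have "\<not> i \<le> k - 1"
    proof
      assume "i \<le> k - 1"
      hence "Vs i \<subseteq> Vs (k - 1)" using km by (intro mc) auto
      then show False using True u by blast
    qed
    hence "Vs (k - 1) \<subseteq> Vs i" using that by (intro mc) auto
    hence "j \<in> Vs i" using j by blast
    hence "W i = Vs i" using True unfolding W_def swimg by (auto simp: swimg sw_def)
    then show ?thesis by simp
  next
    case False
    have "sw x \<le> x" if "x \<in> Vs i" for x using that False uj unfolding sw_def by auto
    then show ?thesis unfolding sumW by (rule sum_mono)
  qed
  have lt: "\<Sum>(W (k - 1)) < \<Sum>(Vs (k - 1))"
  proof -
    have "\<forall>x\<in>Vs (k - 1). sw x \<le> x" using u uj unfolding sw_def by auto
    moreover have "sw j < j" using uj unfolding sw_def by auto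
    ultimately show ?thesis unfolding sumW using j finVs[of "k - 1"] k
      by (intro sum_strict_mono_ex1) auto
  qed
  have "(\<Sum>i\<le>t. \<Sum>(W i)) < (\<Sum>i\<le>t. \<Sum>(Vs i))"
    by (rule sum_strict_mono_ex1) (use le lt k in auto)
  then show ?thesis using val' cardW by blast
qed



theorem lemma1:
  fixes n \<sigma> t :: nat and E :: "nat \<Rightarrow> nat \<Rightarrow> bool"
  assumes "simple_graph n E"
    and "connected_graph n E"
    and "1 \<le> \<sigma>" and "\<sigma> \<le> n"
    and "\<forall>i j. \<sigma> < i \<and> i \<le> j \<and> j \<le> n \<longrightarrow> deg E j \<le> deg E i"
  shows "\<exists>Vs \<pi>. valid_tuple n E \<sigma> t Vs \<pi> \<and>
           (\<forall>Vs' \<pi>'. valid_tuple n E \<sigma> t Vs' \<pi>' \<longrightarrow> card (Vs' t) \<le> card (Vs t)) \<and>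
           (\<forall>k\<in>{1..t}. \<forall>i\<in>Vs k - Vs (k - 1). \<forall>j\<in>Vs (k - 1). j < i)"
proof -
  define K where "K = {card (Vs t) | Vs \<pi>. valid_tuple n E \<sigma> t Vs \<pi>}"
  have Kb: "K \<subseteq> {..n}"
  proof
    fix c assume "c \<in> K"
    then obtain Vs \<pi> where v: "valid_tuple n E \<sigma> t Vs \<pi>" and c: "c = card (Vs t)" unfolding K_def by blast
    have "Vs t \<subseteq> {1..n}" using v unfolding valid_unf by blast
    hence "card (Vs t) \<le> card {1..n}" by (intro card_mono) auto
    then show "c \<in> {..n}" using c by simp
  qed
  have finK: "finite K" using Kb finite_subset by blast
  obtain Vs0 \<pi>0 where v0: "valid_tuple n E \<sigma> t Vs0 \<pi>0" using exists_valid[OF assms(1-4)] by blast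
  have neK: "K \<noteq> {}" using v0 unfolding K_def by blast
  define mx where "mx = Max K"
  have "mx \<in> K" unfolding mx_def using finK neK by (rule Max_in)
  then obtain Vs1 \<pi>1 where v1: "valid_tuple n E \<sigma> t Vs1 \<pi>1" and c1: "card (Vs1 t) = mx"
    unfolding K_def by blast
  have ub: "card (Vs t) \<le> mx" if "valid_tuple n E \<sigma> t Vs \<pi>" for Vs \<pi>
  proof -
    have "card (Vs t) \<in> K" using that unfolding K_def by blast
    then show ?thesis unfolding mx_def using finK by simp
  qed
  define P where "P p = (valid_tuple n E \<sigma> t (fst p) (snd p) \<and> card (fst p t) = mx)" for p :: "(nat \<Rightarrow> nat set) \<times> (nat \<Rightarrow> nat)"
  define m where "m p = (\<Sum>i\<le>t. \<Sum>(fst p i))" for p :: "(nat \<Rightarrow> nat set) \<times> (nat \<Rightarrow> nat)"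
  have "P (Vs1, \<pi>1)" unfolding P_def using v1 c1 by simp
  then obtain p where Pp: "P p" and minp: "\<forall>q. P q \<longrightarrow> m p \<le> m q"
    using ex_has_least_nat[of P "(Vs1, \<pi>1)" m] by blast
  obtain Vs \<pi> where p: "p = (Vs, \<pi>)" by (cases p)
  have v: "valid_tuple n E \<sigma> t Vs \<pi>" and cV: "card (Vs t) = mx" using Pp unfolding P_def p by auto
  have ord: "\<forall>k\<in>{1..t}. \<forall>i\<in>Vs k - Vs (k - 1). \<forall>j\<in>Vs (k - 1). j < i"
  proof (intro ballI, rule ccontr)
    fix k i j assume k: "k \<in> {1..t}" and i: "i \<in> Vs k - Vs (k - 1)" and j: "j \<in> Vs (k - 1)" and nij: "\<not> j < i"
    have "i \<noteq> j" using i j by blast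
    hence ij: "i < j" using nij by simp
    obtain Vs' \<pi>' where v': "valid_tuple n E \<sigma> t Vs' \<pi>'" and c': "card (Vs' t) = card (Vs t)"
      and lt: "(\<Sum>i\<le>t. \<Sum>(Vs' i)) < (\<Sum>i\<le>t. \<Sum>(Vs i))"
      using swap_step[OF v assms(5) k i j ij] by blast
    have "P (Vs', \<pi>')" unfolding P_def using v' c' cV by simp
    hence "m p \<le> m (Vs', \<pi>')" using minp by blast
    then show False using lt unfolding m_def p by simp
  qed
  show ?thesis using v cV ub ord by (intro exI[of _ Vs] exI[of _ \<pi>]) auto
qed

end
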